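(* Let $(X,\mathscr{R})$ be a closed mixed reaction network with $\mathscr{R}=\mathscr{R}_{\mathrm{rev}}\sqcup\mathscr{R}_{\mathrm{irr}}$ that is thermodynamically sound. Then its reversible completion $(X,\mathscr{R}^* )$ is thermodynamically sound. Moreover, reaction energies $g^*\in\mathbb{R}^{\mathscr{R}^*}$ can be chosen such that both: - $(X,\mathscr{R}^*,g^* )$ is thermodynamic; - $g^*_r<0<g^*_{\bar r}$ for all $r\in\mathscr{R}_{\mathrm{irr}}$.
   Context: A reaction network (RN) $(X,\mathscr{R})$ consists of a finite non-empty set $X$ of species and a finite non-empty set $\mathscr{R}$ of reactions. Each reaction $r$ is given by stoichiometric coefficients $s^-_{xr},s^+_{xr}\in\mathbb{N}_0$. The stoichiometric matrix $S\in\mathbb{Z}^{X\times\mathscr{R}}$ has entries $S_{xr}=s^+_{xr}-s^-_{xr}$. The RN is closed if every reaction $r$ has $x,y$ with $S_{xr}<0<S_{yr}$. The reverse $\bar r$ of $r$ has $s^-_{x\bar r}=s^+_{xr}$ and $s^+_{x\bar r}=s^-_{xr}$. A mixed RN has $\mathscr{R}=\mathscr{R}_{\mathrm{rev}}\sqcup\mathscr{R}_{\mathrm{irr}}$, where $r\in\mathscr{R}_{\mathrm{rev}}$ implies $\bar r\in\mathscr{R}_{\mathrm{rev}}$, and $r\in\mathscr{R}_{\mathrm{irr}}$ implies $\bar r\notin\mathscr{R}$. For an RN with stoichiometric matrix $S$ and $g\in\mathbb{R}^{\mathscr{R}}$, $(X,\mathscr{R},g)$ is thermodynamic if $g\in(\ker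 S)^\perp$. The mixed RN is thermodynamically sound if there is $g$ with $(X,\mathscr{R},g)$ thermodynamic and $g_r<0$ for all $r\in\mathscr{R}_{\mathrm{irr}}$. The reversible completion is $(X,\mathscr{R}^* )$ with $\mathscr{R}^*=\mathscr{R}_{\mathrm{rev}}\sqcup\mathscr{R}_{\mathrm{irr}}\sqcup\{\bar r: r\in\mathscr{R}_{\mathrm{irr}}\}$. As a reversible RN, it is thermodynamically sound if there is $g^*$ with $(X,\mathscr{R}^*,g^* )$ thermodynamic. *)

theory Defs
  imports Complex_Main
begin

text \<open>A reaction is given by its stoichiometric coefficients: the pair
  (reactant coefficients s^-, product coefficients s^+), each a function
  species => nat.  Reactions are identified with their coefficient data.\<close>

type_synonym 'x rn_complex = "'x \<Rightarrow> nat"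
type_synonym 'x reaction = "'x rn_complex \<times> 'x rn_complex"

definition stoich :: "'x reaction \<Rightarrow> 'x \<Rightarrow> int" where
  "stoich r x = int (snd r x) - int (fst r x)"

definition rev_reaction :: "'x reaction \<Rightarrow> 'x reaction" where
  "rev_reaction r = (snd r, fst r)"

definition reaction_network :: "'x set \<Rightarrow> 'x reaction set \<Rightarrow> bool" where
  "reaction_network X R \<longleftrightarrow> finite X \<and> X \<noteq> {} \<and> finite R \<and> R \<noteq> {} \<and>
     (\<forall>r\<in>R. \<forall>x. x \<notin> X \<longrightarrow> fst r x = 0 \<and> snd r x = 0)"

definition closed_RN :: "'x set \<Rightarrow> 'x reaction set \<Rightarrow> bool" where
  "closed_RN X R \<longleftrightarrow> (\<forall>r\<in>R. \<exists>x\<in>X. \<exists>y\<in>X. stoich r x < 0 \<and> 0 < stoich r y)"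

definition stoich_kernel :: "'x set \<Rightarrow> 'x reaction set \<Rightarrow> ('x reaction \<Rightarrow> real) set" where
  "stoich_kernel X R = {v. (\<forall>r. r \<notin> R \<longrightarrow> v r = 0) \<and>
      (\<forall>x\<in>X. (\<Sum>r\<in>R. of_int (stoich r x) * v r) = 0)}"

definition thermodynamic :: "'x set \<Rightarrow> 'x reaction set \<Rightarrow> ('x reaction \<Rightarrow> real) \<Rightarrow> bool" where
  "thermodynamic X R g \<longleftrightarrow> (\<forall>v\<in>stoich_kernel X R. (\<Sum>r\<in>R. g r * v r) = 0)"

definition mixed_RN :: "'x set \<Rightarrow> 'x reaction set \<Rightarrow> 'x reaction set \<Rightarrow> 'x reaction set \<Rightarrow> bool" where
  "mixed_RN X R Rrev Rirr \<longleftrightarrow> reaction_network X R \<and> R = Rrev \<union> Rirr \<and> Rrev \<inter> Rirr = {} \<and>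
     (\<forall>r\<in>Rrev. rev_reaction r \<in> Rrev) \<and> (\<forall>r\<in>Rirr. rev_reaction r \<notin> R)"

definition thermo_sound_mixed :: "'x set \<Rightarrow> 'x reaction set \<Rightarrow> 'x reaction set \<Rightarrow> bool" where
  "thermo_sound_mixed X R Rirr \<longleftrightarrow> (\<exists>g. thermodynamic X R g \<and> (\<forall>r\<in>Rirr. g r < 0))"

definition rev_completion :: "'x reaction set \<Rightarrow> 'x reaction set \<Rightarrow> 'x reaction set" where
  "rev_completion Rrev Rirr = Rrev \<union> Rirr \<union> rev_reaction ` Rirr"

end

theory Submission
  imports Defs
begin

lemma rev_rev[simp]: "rev_reaction (rev_reaction r) = r"
  by (simp add: rev_reaction_def)

lemma inj_rev: "inj rev_reaction"
  by (metis injI rev_rev)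

lemma stoich_rev: "stoich (rev_reaction r) x = - stoich r x"
  by (simp add: stoich_def rev_reaction_def)

lemma sum_split:
  fixes a :: "'x reaction \<Rightarrow> real"
  assumes fin: "finite Rrev" "finite Rirr" and dis: "Rrev \<inter> Rirr = {}"
    and nr: "\<forall>r\<in>Rirr. rev_reaction r \<notin> Rrev \<union> Rirr"
    and anti: "\<forall>r\<in>Rirr. a (rev_reaction r) = - a r"
  shows "(\<Sum>r\<in>rev_completion Rrev Rirr. a r * v r) =
         (\<Sum>r\<in>Rrev \<union> Rirr. a r * (if r \<in> Rirr then v r - v (rev_reaction r)
                                    else if r \<in> Rrev then v r else 0))"
proof -
  have d1: "(Rrev \<union> Rirr) \<inter> rev_reaction ` Rirr = {}" using nr by auto
  have "(\<Sum>r\<in>rev_completion Rrev Rirr. a r * v r) =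
        (\<Sum>r\<in>Rrev \<union> Rirr. a r * v r) + (\<Sum>r\<in>rev_reaction ` Rirr. a r * v r)"
    unfolding rev_completion_def using fin d1 by (simp add: sum.union_disjoint)
  also have "(\<Sum>r\<in>rev_reaction ` Rirr. a r * v r) = (\<Sum>r\<in>Rirr. a (rev_reaction r) * v (rev_reaction r))"
  proof -
    have "inj_on rev_reaction Rirr" using inj_rev by (rule inj_on_subset) simp
    then show ?thesis by (simp add: sum.reindex)
  qed
  also have "\<dots> = (\<Sum>r\<in>Rirr. - a r * v (rev_reaction r))"
    using anti by (intro sum.cong) auto
  also have "(\<Sum>r\<in>Rrev \<union> Rirr. a r * v r) = (\<Sum>r\<in>Rrev. a r * v r) + (\<Sum>r\<in>Rirr. a r * v r)"
    using fin dis by (simp add: sum.union_disjoint)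
  finally have L: "(\<Sum>r\<in>rev_completion Rrev Rirr. a r * v r) =
      (\<Sum>r\<in>Rrev. a r * v r) + (\<Sum>r\<in>Rirr. a r * (v r - v (rev_reaction r)))"
    by (simp add: sum_subtractf algebra_simps sum_negf)
  have "(\<Sum>r\<in>Rrev \<union> Rirr. a r * (if r \<in> Rirr then v r - v (rev_reaction r)
                                    else if r \<in> Rrev then v r else 0))
     = (\<Sum>r\<in>Rrev. a r * (if r \<in> Rirr then v r - v (rev_reaction r)
                                    else if r \<in> Rrev then v r else 0))
       + (\<Sum>r\<in>Rirr. a r * (if r \<in> Rirr then v r - v (rev_reaction r)
                                    else if r \<in> Rrev then v r else 0))"
    using fin dis by (simp add: sum.union_disjoint)
  also have "\<dots> = (\<Sum>r\<in>Rrev. a r * v r) + (\<Sum>r\<in>Rirr. a r * (v r - v (rev_reaction r)))"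
    using dis by (intro arg_cong2[where f="(+)"] sum.cong) auto
  finally show ?thesis using L by simp
qed

theorem proposition5:
  fixes X :: "'x set" and R Rrev Rirr :: "'x reaction set"
  assumes "mixed_RN X R Rrev Rirr"
    and "closed_RN X R"
    and "thermo_sound_mixed X R Rirr"
  shows "mixed_RN X (rev_completion Rrev Rirr) (rev_completion Rrev Rirr) {}
       \<and> thermo_sound_mixed X (rev_completion Rrev Rirr) {}
       \<and> (\<exists>g. thermodynamic X (rev_completion Rrev Rirr) g \<and>
              (\<forall>r\<in>Rirr. g r < 0 \<and> 0 < g (rev_reaction r)))"
proof -
  note M = assms(1)[unfolded mixed_RN_def reaction_network_def]
  have fin: "finite Rrev" "finite Rirr" using M by auto
  have dis: "Rrev \<inter> Rirr = {}" using M by auto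
  have nr: "\<forall>r\<in>Rirr. rev_reaction r \<notin> Rrev \<union> Rirr" using M by auto
  have P1: "mixed_RN X (rev_completion Rrev Rirr) (rev_completion Rrev Rirr) {}"
  proof -
    have sup: "\<forall>r\<in>rev_completion Rrev Rirr. \<forall>x. x \<notin> X \<longrightarrow> fst r x = 0 \<and> snd r x = 0"
    proof (intro ballI allI impI)
      fix r x assume r: "r \<in> rev_completion Rrev Rirr" and x: "x \<notin> X"
      have s0: "\<forall>r\<in>Rrev \<union> Rirr. \<forall>x. x \<notin> X \<longrightarrow> fst r x = 0 \<and> snd r x = 0"
        using M by blast
      show "fst r x = 0 \<and> snd r x = 0"
      proof (cases "r \<in> Rrev \<union> Rirr")
        case True then show ?thesis using s0 x by blast
      next
        case False
        then obtain s where s: "s \<in> Rirr" "r = rev_reaction s"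
          using r unfolding rev_completion_def by blast
        have "fst s x = 0 \<and> snd s x = 0" using s0 s(1) x by blast
        then show ?thesis using s(2) by (simp add: rev_reaction_def)
      qed
    qed
    have cl: "\<forall>r\<in>rev_completion Rrev Rirr. rev_reaction r \<in> rev_completion Rrev Rirr"
    proof
      fix r assume r: "r \<in> rev_completion Rrev Rirr"
      have c: "\<forall>r\<in>Rrev. rev_reaction r \<in> Rrev" using M by blast
      show "rev_reaction r \<in> rev_completion Rrev Rirr"
      proof -
        have "r \<in> Rrev \<or> r \<in> Rirr \<or> r \<in> rev_reaction ` Rirr"
          using r unfolding rev_completion_def by blast
        moreover have "rev_reaction r \<in> Rrev" if "r \<in> Rrev" using c that by blast
        moreover have "rev_reaction r \<in> rev_reaction ` Rirr" if "r \<in> Rirr" using that by blast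
        moreover have "rev_reaction r \<in> Rirr" if "r \<in> rev_reaction ` Rirr" using that by auto
        ultimately show ?thesis unfolding rev_completion_def by blast
      qed
    qed
    have fc: "finite (rev_completion Rrev Rirr)" using fin unfolding rev_completion_def by blast
    have ne: "rev_completion Rrev Rirr \<noteq> {}" using M unfolding rev_completion_def by blast
    show ?thesis unfolding mixed_RN_def reaction_network_def
      using sup cl fc ne M by blast
  qed
  have P2: "thermo_sound_mixed X (rev_completion Rrev Rirr) {}"
    unfolding thermo_sound_mixed_def thermodynamic_def
    by (rule exI[of _ "\<lambda>_. 0"]) simp
  obtain g where gt: "thermodynamic X R g" and gn: "\<forall>r\<in>Rirr. g r < 0"
    using assms(3) unfolding thermo_sound_mixed_def by blast
  define h where "h r = (if r \<in> rev_reaction ` Rirr then - g (rev_reaction r) else g r)" for r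
  have hirr: "h r = g r" if "r \<in> Rirr" for r
  proof -
    have "r \<notin> rev_reaction ` Rirr"
    proof
      assume "r \<in> rev_reaction ` Rirr"
      then obtain s where "s \<in> Rirr" "r = rev_reaction s" by auto
      then have "rev_reaction r \<in> Rirr" by simp
      with nr that show False by (metis UnI2 rev_rev)
    qed
    then show ?thesis by (simp add: h_def)
  qed
  have hrev: "h (rev_reaction r) = - g r" if "r \<in> Rirr" for r
    using that by (simp add: h_def)
  have anti: "\<forall>r\<in>Rirr. h (rev_reaction r) = - h r" using hirr hrev by simp
  have hR: "h r = g r" if "r \<in> Rrev \<union> Rirr" for r
  proof -
    have "r \<notin> rev_reaction ` Rirr" using that nr by force
    then show ?thesis by (simp add: h_def)
  qed
  have P3: "thermodynamic X (rev_completion Rrev Rirr) h"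
    unfolding thermodynamic_def
  proof
    fix v assume v: "v \<in> stoich_kernel X (rev_completion Rrev Rirr)"
    define w where "w r = (if r \<in> Rirr then v r - v (rev_reaction r)
                                    else if r \<in> Rrev then v r else 0)" for r
    have RR: "R = Rrev \<union> Rirr" using M by auto
    have wk: "w \<in> stoich_kernel X R"
      unfolding stoich_kernel_def
    proof (intro CollectI conjI allI impI ballI)
      fix r assume "r \<notin> R" then show "w r = 0" using RR by (simp add: w_def)
    next
      fix x assume x: "x \<in> X"
      have a: "\<forall>r\<in>Rirr. (\<lambda>r. real_of_int (stoich r x)) (rev_reaction r) = - real_of_int (stoich r x)"
        by (simp add: stoich_rev)
      have "(\<Sum>r\<in>R. real_of_int (stoich r x) * w r) =
            (\<Sum>r\<in>rev_completion Rrev Rirr. real_of_int (stoich r x) * v r)"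
        using sum_split[OF fin dis nr a, of v] RR by (simp add: w_def)
      also have "\<dots> = 0" using v x unfolding stoich_kernel_def by auto
      finally show "(\<Sum>r\<in>R. real_of_int (stoich r x) * w r) = 0" .
    qed
    have "(\<Sum>r\<in>rev_completion Rrev Rirr. h r * v r) = (\<Sum>r\<in>Rrev \<union> Rirr. h r * w r)"
      using sum_split[OF fin dis nr anti, of v] by (simp add: w_def)
    also have "\<dots> = (\<Sum>r\<in>R. g r * w r)" using RR hR by (intro sum.cong) auto
    also have "\<dots> = 0" using gt wk unfolding thermodynamic_def by blast
    finally show "(\<Sum>r\<in>rev_completion Rrev Rirr. h r * v r) = 0" .
  qed
  have "\<forall>r\<in>Rirr. h r < 0 \<and> 0 < h (rev_reaction r)" using gn hirr hrev by simp
  with P1 P2 P3 show ?thesis by blast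
qed

end
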